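(* Let $u_0\in H^2(\mathbb{R}_+)$ and let $$u(t,x)=\frac{1}{\sqrt{4\pi t}}\int_0^\infty u_0(y)\left[e^{-\frac{(x-y+t)^2}{4t}}-e^{-x}e^{-\frac{(x+y-t)^2}{4t}}\right]dy,$$ which is a solution $u\in C(\mathbb{R}_+,H^2(\mathbb{R}_+))$ of the boundary-value problem $u_t=u_x+u_{xx}$ for $x>0$, $u(t,0)=0$, $u(t,x)\to0$ as $x\to+\infty$, with $u(0,x)=u_0(x)$. Then $$\|u(t,\cdot)\|_{W^{2,\infty}(\mathbb{R}_+)}\to0\quad\text{as } t\to\infty.$$
   Context: $\mathbb{R}_+=(0,\infty)$. *)

theory Defs
  imports "HOL-Analysis.Analysis"
begin

definition test_fun_pos :: "(real \<Rightarrow> real) \<Rightarrow> bool" where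
  "test_fun_pos \<phi> \<longleftrightarrow>
     (\<forall>n x. (deriv ^^ n) \<phi> differentiable (at x)) \<and>
     (\<exists>a b. 0 < a \<and> a < b \<and> (\<forall>x. x \<notin> {a..b} \<longrightarrow> \<phi> x = 0))"

definition L2_pos :: "(real \<Rightarrow> real) \<Rightarrow> bool" where
  "L2_pos f \<longleftrightarrow> set_borel_measurable lborel {0<..} f \<and>
                  set_integrable lborel {0<..} (\<lambda>x. (f x)\<^sup>2)"

definition weak_deriv_pos :: "(real \<Rightarrow> real) \<Rightarrow> (real \<Rightarrow> real) \<Rightarrow> bool" where
  "weak_deriv_pos f g \<longleftrightarrow>
     (\<forall>\<phi>. test_fun_pos \<phi> \<longrightarrow>
        (LBINT x:{0<..}. f x * deriv \<phi> x) = - (LBINT x:{0<..}. g x * \<phi> x))"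

definition H2_pos :: "(real \<Rightarrow> real) \<Rightarrow> bool" where
  "H2_pos f \<longleftrightarrow> L2_pos f \<and>
     (\<exists>v w. L2_pos v \<and> L2_pos w \<and> weak_deriv_pos f v \<and> weak_deriv_pos v w)"

definition sol :: "(real \<Rightarrow> real) \<Rightarrow> real \<Rightarrow> real \<Rightarrow> real" where
  "sol u0 t x = 1 / sqrt (4 * pi * t) *
     (LBINT y:{0<..}. u0 y * (exp (- ((x - y + t)\<^sup>2) / (4 * t))
                              - exp (- x) * exp (- ((x + y - t)\<^sup>2) / (4 * t))))"

end

theory Submission
  imports Defs "HOL-Probability.Probability"
begin




lemma mvt_abs:
  fixes k k' :: "real \<Rightarrow> real"
  assumes der: "\<And>x. (k has_real_derivative k' x) (at x)"
    and h: "h \<noteq> x0"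
  shows "\<exists>\<xi>. \<bar>\<xi> - x0\<bar> \<le> \<bar>h - x0\<bar> \<and> k h - k x0 = (h - x0) * k' \<xi>"
proof (cases "h < x0")
  case True
  from MVT2[OF True, of k k'] der obtain z where "h < z" "z < x0" "k x0 - k h = (x0 - h) * k' z" by blast
  then show ?thesis by (intro exI[of _ z]) (auto simp: algebra_simps)
next
  case False
  then have "x0 < h" using h by auto
  from MVT2[OF this, of k k'] der obtain z where "x0 < z" "z < h" "k h - k x0 = (h - x0) * k' z" by blast
  then show ?thesis by (intro exI[of _ z]) (auto simp: algebra_simps)
qed

lemma deriv_under_integral:
  fixes v D :: "real \<Rightarrow> real" and k k' :: "real \<Rightarrow> real \<Rightarrow> real"
  assumes int: "\<And>x. integrable lborel (\<lambda>y. v y * k x y)"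
    and der: "\<And>x y. ((\<lambda>x. k x y) has_real_derivative k' x y) (at x)"
    and meas: "\<And>x. (\<lambda>y. v y * k' x y) \<in> borel_measurable lborel"
    and D: "integrable lborel D"
    and bnd: "\<And>x y. \<bar>x - x0\<bar> \<le> 1 \<Longrightarrow> \<bar>v y * k' x y\<bar> \<le> D y"
  shows "((\<lambda>x. \<integral>y. v y * k x y \<partial>lborel) has_real_derivative (\<integral>y. v y * k' x0 y \<partial>lborel)) (at x0)"
proof -
  let ?F = "\<lambda>x. \<integral>y. v y * k x y \<partial>lborel"
  have q: "(?F x - ?F x0) / (x - x0) = (\<integral>y. (v y * k x y - v y * k x0 y) / (x - x0) \<partial>lborel)" for x
    using int by (simp add: integral_diff)
  show ?thesis
    unfolding has_field_derivative_iff
  proof (subst tendsto_at_iff_sequentially, intro allI impI)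
    fix X :: "nat \<Rightarrow> real"
    assume X: "\<forall>i. X i \<in> UNIV - {x0}" and Xl: "X \<longlonglongrightarrow> x0"
    have "\<forall>\<^sub>F i in sequentially. dist (X i) x0 < 1" using Xl by (rule tendstoD) simp
    then obtain N where N: "\<And>n. n \<ge> N \<Longrightarrow> \<bar>X n - x0\<bar> < 1"
      by (auto simp: eventually_sequentially dist_real_def)
    have Xat: "filterlim X (at x0) sequentially"
      using X by (intro filterlim_atI Xl) auto
    define s where "s n y = (v y * k (X (n + N)) y - v y * k x0 y) / (X (n + N) - x0)" for n y
    have lim: "(\<lambda>n. integral\<^sup>L lborel (s n)) \<longlonglongrightarrow> (\<integral>y. v y * k' x0 y \<partial>lborel)"
    proof (rule integral_dominated_convergence[where w = D])
      show "(\<lambda>y. v y * k' x0 y) \<in> borel_measurable lborel" by (rule meas)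
      show "s n \<in> borel_measurable lborel" for n
        unfolding s_def using int by (intro borel_measurable_divide borel_measurable_diff) auto
      show "integrable lborel D" by (rule D)
      show "AE y in lborel. (\<lambda>n. s n y) \<longlonglongrightarrow> v y * k' x0 y"
      proof (rule AE_I2)
        fix y
        have "((\<lambda>x. (k x y - k x0 y) / (x - x0)) \<longlongrightarrow> k' x0 y) (at x0)"
          using der[of y x0] unfolding has_field_derivative_iff .
        from filterlim_compose[OF this Xat]
        have "(\<lambda>n. (k (X n) y - k x0 y) / (X n - x0)) \<longlonglongrightarrow> k' x0 y" by simp
        then have "(\<lambda>n. (k (X (n + N)) y - k x0 y) / (X (n + N) - x0)) \<longlonglongrightarrow> k' x0 y"
          by (rule LIMSEQ_ignore_initial_segment)
        then have "(\<lambda>n. v y * ((k (X (n + N)) y - k x0 y) / (X (n + N) - x0))) \<longlonglongrightarrow> v y * k' x0 y"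
          by (intro tendsto_mult tendsto_const)
        then show "(\<lambda>n. s n y) \<longlonglongrightarrow> v y * k' x0 y"
          by (simp add: s_def right_diff_distrib[symmetric])
      qed
      show "AE y in lborel. norm (s n y) \<le> D y" for n
      proof (rule AE_I2)
        fix y
        have ne: "X (n + N) \<noteq> x0" using X by auto
        obtain \<xi> where xi: "\<bar>\<xi> - x0\<bar> \<le> \<bar>X (n + N) - x0\<bar>"
          "k (X (n + N)) y - k x0 y = (X (n + N) - x0) * k' \<xi> y"
          using mvt_abs[of "\<lambda>x. k x y" "\<lambda>x. k' x y", OF der ne] by blast
        have "\<bar>\<xi> - x0\<bar> \<le> 1" using xi(1) N[of "n + N"] by auto
        moreover have "s n y = v y * k' \<xi> y"
          using xi(2) ne by (simp add: s_def right_diff_distrib[symmetric])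
        ultimately show "norm (s n y) \<le> D y" using bnd by simp
      qed
    qed
    have e: "integral\<^sup>L lborel (s n) = (?F (X (n + N)) - ?F x0) / (X (n + N) - x0)" for n
      unfolding s_def by (rule q[symmetric])
    have "(\<lambda>n. (?F (X (n + N)) - ?F x0) / (X (n + N) - x0)) \<longlonglongrightarrow> (\<integral>y. v y * k' x0 y \<partial>lborel)"
      using lim unfolding e .
    then have "(\<lambda>n. ((\<lambda>x. (?F x - ?F x0) / (x - x0)) \<circ> X) (n + N)) \<longlonglongrightarrow> (\<integral>y. v y * k' x0 y \<partial>lborel)"
      unfolding o_def .
    then show "((\<lambda>x. (?F x - ?F x0) / (x - x0)) \<circ> X) \<longlonglongrightarrow> (\<integral>y. v y * k' x0 y \<partial>lborel)"
      by (rule LIMSEQ_offset)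
  qed
qed



definition g0 :: "real \<Rightarrow> real \<Rightarrow> real" where "g0 t z = exp (- (z\<^sup>2) / (4 * t))"
definition g1 :: "real \<Rightarrow> real \<Rightarrow> real" where "g1 t z = - (z / (2 * t)) * g0 t z"
definition g2 :: "real \<Rightarrow> real \<Rightarrow> real" where "g2 t z = (z\<^sup>2 / (4 * t\<^sup>2) - 1 / (2 * t)) * g0 t z"

lemma g0_der: "t \<noteq> 0 \<Longrightarrow> (g0 t has_real_derivative g1 t z) (at z)"
  unfolding g0_def g1_def
  by (auto intro!: derivative_eq_intros simp: field_simps power2_eq_square)

lemma g1_der: "t \<noteq> 0 \<Longrightarrow> (g1 t has_real_derivative g2 t z) (at z)"
  unfolding g1_def g2_def
  by (auto intro!: derivative_eq_intros g0_der simp: g1_def field_simps power2_eq_square)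

lemma g_meas [measurable]:
  "g0 t \<in> borel_measurable borel" "g1 t \<in> borel_measurable borel" "g2 t \<in> borel_measurable borel"
  unfolding g0_def[abs_def] g1_def[abs_def] g2_def[abs_def] by measurable

lemma gauss:
  assumes "c > 0"
  shows "has_bochner_integral lborel (\<lambda>y. exp (- ((y - m)\<^sup>2) / (4 * c))) (sqrt (4 * pi * c))"
proof -
  have s: "(sqrt (2 * c))\<^sup>2 = 2 * c" using assms by simp
  have nd: "normal_density m (sqrt (2 * c)) y = 1 / sqrt (4 * pi * c) * exp (- ((y - m)\<^sup>2) / (4 * c))" for y
    unfolding normal_density_def s by (simp add: mult.assoc)
  have "has_bochner_integral lborel (normal_density m (sqrt (2 * c))) 1"
    using assms by (simp add: has_bochner_integral_iff integrable_normal_density integral_normal_density)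
  then have "has_bochner_integral lborel (\<lambda>y. sqrt (4 * pi * c) * normal_density m (sqrt (2 * c)) y) (sqrt (4 * pi * c) * 1)"
    by (rule has_bochner_integral_mult_right)
  moreover have "sqrt (4 * pi * c) * normal_density m (sqrt (2 * c)) y = exp (- ((y - m)\<^sup>2) / (4 * c))" for y
    using assms by (simp add: nd)
  ultimately show ?thesis by simp
qed

lemma gaussA: assumes "c > 0" shows "has_bochner_integral lborel (\<lambda>y. g0 c (x - y + a)) (sqrt (4 * pi * c))"
proof -
  have e: "g0 c (x - y + a) = exp (- ((y - (x + a))\<^sup>2) / (4 * c))" for y
  proof -
    have "(x - y + a)\<^sup>2 = (y - (x + a))\<^sup>2" by (simp add: power2_eq_square algebra_simps)
    then show ?thesis by (simp only: g0_def)
  qed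
  show ?thesis by (simp only: e) (rule gauss[OF assms])
qed

lemma gaussB: assumes "c > 0" shows "has_bochner_integral lborel (\<lambda>y. g0 c (x + y - a)) (sqrt (4 * pi * c))"
proof -
  have e: "g0 c (x + y - a) = exp (- ((y - (a - x))\<^sup>2) / (4 * c))" for y
  proof -
    have "(x + y - a)\<^sup>2 = (y - (a - x))\<^sup>2" by (simp add: power2_eq_square algebra_simps)
    then show ?thesis by (simp only: g0_def)
  qed
  show ?thesis by (simp only: e) (rule gauss[OF assms])
qed

lemma g0_pos: "g0 t z > 0" by (simp add: g0_def)

lemma g0_sq: "t > 0 \<Longrightarrow> (g0 (2 * t) z)\<^sup>2 = g0 t z"
  unfolding g0_def by (simp add: power2_eq_square exp_add[symmetric] field_simps)

lemma exp_sq: "(exp a)\<^sup>2 = exp (2 * a)" for a :: real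
  by (simp add: power2_eq_square exp_add[symmetric])

lemma s_exp: "s \<ge> 0 \<Longrightarrow> s * exp (- s) \<le> 1" for s :: real
proof -
  assume "s \<ge> 0"
  have "s \<le> exp s" using exp_ge_add_one_self[of s] by linarith
  then show ?thesis by (simp add: exp_minus field_simps)
qed

lemma s2_exp: "s \<ge> 0 \<Longrightarrow> s\<^sup>2 * exp (- s) \<le> 2" for s :: real
proof -
  assume s: "s \<ge> 0"
  have "s\<^sup>2 \<le> 2 * exp s" using exp_lower_Taylor_quadratic[OF s] s by linarith
  then show ?thesis by (simp add: exp_minus field_simps)
qed

lemma b0: "t > 0 \<Longrightarrow> (g0 t z)\<^sup>2 \<le> 5 * g0 t z"
proof -
  assume "t > 0"
  have "- (z\<^sup>2) / (4 * t) \<le> 0" using \<open>t > 0\<close> by (simp add: divide_nonpos_pos)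
  then have "g0 t z \<le> 1" by (simp add: g0_def)
  then show ?thesis using g0_pos[of t z] by (simp add: power2_eq_square mult_right_le_one_le)
qed

lemma b1: assumes "t \<ge> 1" shows "(g1 t z)\<^sup>2 \<le> 5 * g0 t z"
proof -
  define s where "s = z\<^sup>2 / (4 * t)"
  have s0: "s \<ge> 0" using assms by (auto simp: s_def intro!: divide_nonneg_pos)
  have g: "g0 t z = exp (- s)" by (simp add: g0_def s_def)
  have "(g1 t z)\<^sup>2 = (s / t) * (s * exp (- s)) * exp (-s) / s" if "s \<noteq> 0"
    using that assms unfolding g1_def g by (simp add: s_def power2_eq_square field_simps)
  have "(g1 t z)\<^sup>2 = (1 / t) * (s * exp (- s)) * exp (- s)"
    using assms unfolding g1_def g by (simp add: s_def power2_eq_square field_simps)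
  also have "\<dots> \<le> 1 * 1 * exp (- s)"
    using assms s0 s_exp[OF s0] by (intro mult_mono) auto
  finally show ?thesis using g exp_gt_zero[of "-s"] by linarith
qed

lemma b2: assumes "t \<ge> 1" shows "(g2 t z)\<^sup>2 \<le> 5 * g0 t z"
proof -
  define s where "s = z\<^sup>2 / (4 * t)"
  have s0: "s \<ge> 0" using assms by (auto simp: s_def intro!: divide_nonneg_pos)
  have g: "g0 t z = exp (- s)" by (simp add: g0_def s_def)
  have e: "(g2 t z)\<^sup>2 = (1 / t\<^sup>2) * ((s - 1/2)\<^sup>2 * exp (- s)) * exp (- s)"
    using assms unfolding g2_def g by (simp add: s_def power2_eq_square field_simps)
  have "(s - 1/2)\<^sup>2 \<le> 2 * s\<^sup>2 + 1/2" by (simp add: power2_eq_square algebra_simps)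
     (smt (verit) mult_nonneg_nonneg s0)
  then have "(s - 1/2)\<^sup>2 * exp (- s) \<le> (2 * s\<^sup>2 + 1/2) * exp (-s)" by (simp add: mult_right_mono)
  also have "\<dots> = 2 * (s\<^sup>2 * exp (-s)) + exp (-s) / 2" by (simp add: algebra_simps)
  also have "\<dots> \<le> 2 * 2 + 1 / 2" proof -
    have "exp (- s) \<le> 1" using s0 by simp
    then show ?thesis using s2_exp[OF s0] by linarith
  qed
  finally have h: "(s - 1/2)\<^sup>2 * exp (- s) \<le> 5" by simp
  have t2: "1 / t\<^sup>2 \<le> 1" using assms by (simp add: power_le_one_iff one_le_power)
  have "(g2 t z)\<^sup>2 \<le> 1 * 5 * exp (- s)" unfolding e
    using t2 h by (intro mult_mono) auto
  then show ?thesis using g by simp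
qed

lemma babs: assumes "t \<ge> 1" "(q t z)\<^sup>2 \<le> 5 * g0 t z" shows "\<bar>q t z\<bar> \<le> 3 * g0 (2 * t) z"
proof -
  have "(q t z)\<^sup>2 \<le> (3 * g0 (2 * t) z)\<^sup>2"
    using assms g0_sq[of t z] g0_pos[of t z] by (simp add: power_mult_distrib)
  then have "\<bar>q t z\<bar>\<^sup>2 \<le> (3 * g0 (2 * t) z)\<^sup>2" by simp
  then show ?thesis by (rule power2_le_imp_le) (use g0_pos[of "2*t" z] in simp)
qed

lemma shift: assumes "t \<ge> 1" "\<bar>d\<bar> \<le> 1" shows "g0 (2 * t) (w + d) \<le> exp 1 * g0 (4 * t) w"
proof -
  have e: "2 * (w + d)\<^sup>2 + 2 * d\<^sup>2 - w\<^sup>2 = (w + 2 * d)\<^sup>2" by (simp add: power2_eq_square algebra_simps)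
  have "d\<^sup>2 \<le> 1" using assms(2) abs_square_le_1 by blast
  then have n: "w\<^sup>2 - 2 * (w + d)\<^sup>2 - 16 * t \<le> 0" using e zero_le_power2[of "w + 2 * d"] assms(1) by linarith
  have "(- ((w + d)\<^sup>2) / (4 * (2 * t))) - (1 + - (w\<^sup>2) / (4 * (4 * t))) = (w\<^sup>2 - 2 * (w + d)\<^sup>2 - 16 * t) / (16 * t)"
    using assms(1) by (simp add: field_simps)
  also have "\<dots> \<le> 0" using n assms(1) by (intro divide_nonpos_pos) auto
  finally have "- ((w + d)\<^sup>2) / (4 * (2 * t)) \<le> 1 + - (w\<^sup>2) / (4 * (4 * t))" by simp
  then have "exp (- ((w + d)\<^sup>2) / (4 * (2 * t))) \<le> exp (1 + - (w\<^sup>2) / (4 * (4 * t)))" by simp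
  then show ?thesis unfolding g0_def by (simp only: exp_add)
qed

lemma g0_4sq: "t > 0 \<Longrightarrow> (g0 (4 * t) w)\<^sup>2 = g0 (2 * t) w"
  using g0_sq[of "2 * t" w] by simp

lemma cs:
  fixes v g :: "real \<Rightarrow> real"
  assumes "v \<in> borel_measurable lborel" "integrable lborel (\<lambda>y. (v y)\<^sup>2)"
    "g \<in> borel_measurable lborel" "integrable lborel (\<lambda>y. (g y)\<^sup>2)" "l > 0"
  shows "integrable lborel (\<lambda>y. v y * g y)"
    "\<bar>\<integral>y. v y * g y \<partial>lborel\<bar> \<le> (l * (\<integral>y. (v y)\<^sup>2 \<partial>lborel) + (\<integral>y. (g y)\<^sup>2 \<partial>lborel) / l) / 2"
proof -
  have pw: "\<bar>v y * g y\<bar> \<le> (l * (v y)\<^sup>2 + (g y)\<^sup>2 / l) / 2" for y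
  proof -
    have "0 \<le> (l * \<bar>v y\<bar> - \<bar>g y\<bar>)\<^sup>2 / l" using assms(5) by simp
    also have "\<dots> = l * (v y)\<^sup>2 + (g y)\<^sup>2 / l - 2 * \<bar>v y * g y\<bar>"
      using assms(5) by (simp add: power2_eq_square field_simps abs_mult)
    finally show ?thesis by simp
  qed
  have ib: "integrable lborel (\<lambda>y. (l * (v y)\<^sup>2 + (g y)\<^sup>2 / l) / 2)"
    using assms by auto
  show int: "integrable lborel (\<lambda>y. v y * g y)"
  proof (rule Bochner_Integration.integrable_bound[OF ib])
    show "(\<lambda>y. v y * g y) \<in> borel_measurable lborel" using assms(1,3) by measurable
    show "AE y in lborel. norm (v y * g y) \<le> norm ((l * (v y)\<^sup>2 + (g y)\<^sup>2 / l) / 2)"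
      using pw by (intro AE_I2) (metis abs_ge_self order_trans real_norm_def)
  qed
  have "\<bar>\<integral>y. v y * g y \<partial>lborel\<bar> \<le> (\<integral>y. \<bar>v y * g y\<bar> \<partial>lborel)"
    by (rule integral_abs_bound)
  also have "\<dots> \<le> (\<integral>y. (l * (v y)\<^sup>2 + (g y)\<^sup>2 / l) / 2 \<partial>lborel)"
    by (rule integral_mono[OF integrable_abs[OF int] ib]) (rule pw)
  also have "\<dots> = (l * (\<integral>y. (v y)\<^sup>2 \<partial>lborel) + (\<integral>y. (g y)\<^sup>2 \<partial>lborel) / l) / 2"
    using assms by simp
  finally show "\<bar>\<integral>y. v y * g y \<partial>lborel\<bar> \<le> (l * (\<integral>y. (v y)\<^sup>2 \<partial>lborel) + (\<integral>y. (g y)\<^sup>2 \<partial>lborel) / l) / 2" .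
qed



lemma shiftderA:
  assumes "\<And>z. (f has_real_derivative f' z) (at z)"
  shows "((\<lambda>x. f (x - y + t)) has_real_derivative f' (x - y + t)) (at x)"
proof -
  have "((\<lambda>x. f (x - y + t)) has_real_derivative f' (x - y + t) * 1) (at x)"
    by (rule DERIV_chain2[OF assms]) (auto intro!: derivative_eq_intros)
  then show ?thesis by simp
qed

lemma shiftderB:
  assumes "\<And>z. (f has_real_derivative f' z) (at z)"
  shows "((\<lambda>x. f (x + y - t)) has_real_derivative f' (x + y - t)) (at x)"
proof -
  have "((\<lambda>x. f (x + y - t)) has_real_derivative f' (x + y - t) * 1) (at x)"
    by (rule DERIV_chain2[OF assms]) (auto intro!: derivative_eq_intros)
  then show ?thesis by simp
qed

lemma kern:
  fixes v p :: "real \<Rightarrow> real" and q :: "real \<Rightarrow> real \<Rightarrow> real"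
  assumes t: "t \<ge> 1" and qm: "q t \<in> borel_measurable borel" and qb: "\<And>z. (q t z)\<^sup>2 \<le> 5 * g0 t z"
    and G: "has_bochner_integral lborel (\<lambda>y. g0 t (p y)) (sqrt (4 * pi * t))"
    and pm: "p \<in> borel_measurable borel"
    and vm: "v \<in> borel_measurable lborel" and v2: "integrable lborel (\<lambda>y. (v y)\<^sup>2)" and l: "l > 0"
  shows "integrable lborel (\<lambda>y. v y * q t (p y))"
    "\<bar>\<integral>y. v y * q t (p y) \<partial>lborel\<bar> \<le> (l * (\<integral>y. (v y)\<^sup>2 \<partial>lborel) + 5 * sqrt (4 * pi * t) / l) / 2"
proof -
  have m: "(\<lambda>y. q t (p y)) \<in> borel_measurable lborel" using qm pm by measurable
  have i5: "integrable lborel (\<lambda>y. 5 * g0 t (p y))" using G by (auto simp: has_bochner_integral_iff)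
  have i2: "integrable lborel (\<lambda>y. (q t (p y))\<^sup>2)"
  proof (rule Bochner_Integration.integrable_bound[OF i5])
    show "(\<lambda>y. (q t (p y))\<^sup>2) \<in> borel_measurable lborel" using m by measurable
    show "AE y in lborel. norm ((q t (p y))\<^sup>2) \<le> norm (5 * g0 t (p y))"
    proof (rule AE_I2)
      fix y
      have "0 < g0 t (p y)" by (rule g0_pos)
      then show "norm ((q t (p y))\<^sup>2) \<le> norm (5 * g0 t (p y))" using qb[of "p y"] by simp
    qed
  qed
  have "(\<integral>y. (q t (p y))\<^sup>2 \<partial>lborel) \<le> (\<integral>y. 5 * g0 t (p y) \<partial>lborel)"
    using i2 i5 qb by (intro integral_mono) auto
  also have "\<dots> = 5 * sqrt (4 * pi * t)" using G by (simp add: has_bochner_integral_iff)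
  finally have ib: "(\<integral>y. (q t (p y))\<^sup>2 \<partial>lborel) \<le> 5 * sqrt (4 * pi * t)" .
  show "integrable lborel (\<lambda>y. v y * q t (p y))" using cs(1)[OF vm v2 m i2 l] .
  have "\<bar>\<integral>y. v y * q t (p y) \<partial>lborel\<bar> \<le> (l * (\<integral>y. (v y)\<^sup>2 \<partial>lborel) + (\<integral>y. (q t (p y))\<^sup>2 \<partial>lborel) / l) / 2"
    using cs(2)[OF vm v2 m i2 l] .
  also have "\<dots> \<le> (l * (\<integral>y. (v y)\<^sup>2 \<partial>lborel) + 5 * sqrt (4 * pi * t) / l) / 2"
    using ib l by (simp add: divide_right_mono)
  finally show "\<bar>\<integral>y. v y * q t (p y) \<partial>lborel\<bar> \<le> (l * (\<integral>y. (v y)\<^sup>2 \<partial>lborel) + 5 * sqrt (4 * pi * t) / l) / 2" .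
qed

lemma dom:
  fixes v p :: "real \<Rightarrow> real"
  assumes t: "t \<ge> 1" and pm: "p \<in> borel_measurable borel"
    and G: "has_bochner_integral lborel (\<lambda>y. g0 (2 * t) (p y)) (sqrt (4 * pi * (2 * t)))"
    and vm: "v \<in> borel_measurable lborel" and v2: "integrable lborel (\<lambda>y. (v y)\<^sup>2)"
  shows "integrable lborel (\<lambda>y. \<bar>v y * (3 * exp 1 * g0 (4 * t) (p y))\<bar>)"
proof -
  have m: "(\<lambda>y. 3 * exp 1 * g0 (4 * t) (p y)) \<in> borel_measurable lborel" using pm by measurable
  have "integrable lborel (\<lambda>y. (3 * exp 1)\<^sup>2 * g0 (2 * t) (p y))" using G
    by (auto simp: has_bochner_integral_iff)
  moreover have "(3 * exp 1 * g0 (4 * t) (p y))\<^sup>2 = (3 * exp 1)\<^sup>2 * g0 (2 * t) (p y)" for y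
    using g0_4sq[of t "p y"] t by (simp add: power_mult_distrib)
  ultimately have "integrable lborel (\<lambda>y. (3 * exp 1 * g0 (4 * t) (p y))\<^sup>2)" by simp
  from cs(1)[OF vm v2 m this, of 1] show ?thesis by (intro integrable_abs) simp
qed

lemma dbound:
  assumes t: "t \<ge> 1" and qb: "\<And>z. (q t z)\<^sup>2 \<le> 5 * g0 t z" and d: "\<bar>d\<bar> \<le> 1"
  shows "\<bar>v * q t (w + d)\<bar> \<le> \<bar>v * (3 * exp 1 * g0 (4 * t) w)\<bar>"
proof -
  have "\<bar>q t (w + d)\<bar> \<le> 3 * g0 (2 * t) (w + d)" using babs[where q=q and t=t and z="w + d", OF t qb] .
  also have "\<dots> \<le> 3 * (exp 1 * g0 (4 * t) w)" using shift[OF t d] by simp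
  finally have "\<bar>q t (w + d)\<bar> \<le> \<bar>3 * exp 1 * g0 (4 * t) w\<bar>" using g0_pos[of "4*t" w] by simp
  then show ?thesis by (simp add: abs_mult mult_left_mono)
qed

lemma FderA:
  fixes v :: "real \<Rightarrow> real" and q q' :: "real \<Rightarrow> real \<Rightarrow> real"
  assumes t: "t \<ge> 1" and der: "\<And>z. (q t has_real_derivative q' t z) (at z)"
    and qm: "q' t \<in> borel_measurable borel" and qb: "\<And>z. (q' t z)\<^sup>2 \<le> 5 * g0 t z"
    and int: "\<And>x. integrable lborel (\<lambda>y. v y * q t (x - y + t))"
    and vm: "v \<in> borel_measurable lborel" and v2: "integrable lborel (\<lambda>y. (v y)\<^sup>2)"
  shows "((\<lambda>x. \<integral>y. v y * q t (x - y + t) \<partial>lborel) has_real_derivative (\<integral>y. v y * q' t (x0 - y + t) \<partial>lborel)) (at x0)"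
proof (rule deriv_under_integral[where D = "\<lambda>y. \<bar>v y * (3 * exp 1 * g0 (4 * t) (x0 - y + t))\<bar>"])
  show "integrable lborel (\<lambda>y. v y * q t (x - y + t))" for x by (rule int)
  show "((\<lambda>x. q t (x - y + t)) has_real_derivative q' t (x - y + t)) (at x)" for x y
    by (rule shiftderA[OF der])
  show "(\<lambda>y. v y * q' t (x - y + t)) \<in> borel_measurable lborel" for x
    using vm qm by measurable
  have "1 \<le> t" by (rule t)
  show "integrable lborel (\<lambda>y. \<bar>v y * (3 * exp 1 * g0 (4 * t) (x0 - y + t))\<bar>)"
    using t by (intro dom[OF t _ _ vm v2] gaussA) auto
  show "\<bar>v y * q' t (x - y + t)\<bar> \<le> \<bar>v y * (3 * exp 1 * g0 (4 * t) (x0 - y + t))\<bar>" if "\<bar>x - x0\<bar> \<le> 1" for x y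
    using dbound[where q="q'" and t=t and d="x - x0" and v="v y" and w="x0 - y + t", OF t qb that] by (simp add: algebra_simps)
qed

lemma FderB:
  fixes v :: "real \<Rightarrow> real" and q q' :: "real \<Rightarrow> real \<Rightarrow> real"
  assumes t: "t \<ge> 1" and der: "\<And>z. (q t has_real_derivative q' t z) (at z)"
    and qm: "q' t \<in> borel_measurable borel" and qb: "\<And>z. (q' t z)\<^sup>2 \<le> 5 * g0 t z"
    and int: "\<And>x. integrable lborel (\<lambda>y. v y * q t (x + y - t))"
    and vm: "v \<in> borel_measurable lborel" and v2: "integrable lborel (\<lambda>y. (v y)\<^sup>2)"
  shows "((\<lambda>x. \<integral>y. v y * q t (x + y - t) \<partial>lborel) has_real_derivative (\<integral>y. v y * q' t (x0 + y - t) \<partial>lborel)) (at x0)"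
proof (rule deriv_under_integral[where D = "\<lambda>y. \<bar>v y * (3 * exp 1 * g0 (4 * t) (x0 + y - t))\<bar>"])
  show "integrable lborel (\<lambda>y. v y * q t (x + y - t))" for x by (rule int)
  show "((\<lambda>x. q t (x + y - t)) has_real_derivative q' t (x + y - t)) (at x)" for x y
    by (rule shiftderB[OF der])
  show "(\<lambda>y. v y * q' t (x + y - t)) \<in> borel_measurable lborel" for x
    using vm qm by measurable
  show "integrable lborel (\<lambda>y. \<bar>v y * (3 * exp 1 * g0 (4 * t) (x0 + y - t))\<bar>)"
    using t by (intro dom[OF t _ _ vm v2] gaussB) auto
  show "\<bar>v y * q' t (x + y - t)\<bar> \<le> \<bar>v y * (3 * exp 1 * g0 (4 * t) (x0 + y - t))\<bar>" if "\<bar>x - x0\<bar> \<le> 1" for x y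
    using dbound[where q="q'" and t=t and d="x - x0" and v="v y" and w="x0 + y - t", OF t qb that] by (simp add: algebra_simps)
qed

lemma final_arith:
  fixes \<epsilon> l Av t :: real
  assumes e: "\<epsilon> > 0" and l: "l = 25 / \<epsilon>" and Av: "Av \<ge> 0" and t: "t \<ge> max 1 ((5 * l * Av / \<epsilon>)\<^sup>2)"
  shows "5 * (1 / sqrt (4 * pi * t) * ((l * Av + 5 * sqrt (4 * pi * t) / l) / 2)) \<le> \<epsilon>"
proof -
  have t1: "t \<ge> 1" using t by simp
  have lp: "l > 0" using l e by simp
  define s where "s = sqrt (4 * pi * t)"
  have sp: "s > 0" using t1 by (simp add: s_def)
  have "sqrt t \<le> s" unfolding s_def using t1 pi_gt3 by (intro real_sqrt_le_mono) simp
  moreover have "5 * l * Av / \<epsilon> \<le> sqrt t"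
    using t by (intro real_le_rsqrt) simp
  ultimately have h: "5 * l * Av / \<epsilon> \<le> s" by simp
  have e1: "5 * (1 / s * ((l * Av + 5 * s / l) / 2)) = 5 * l * Av / (2 * s) + 25 / (2 * l)"
    using sp lp by (simp add: field_simps)
  have "25 / (2 * l) = \<epsilon> / 2" using e unfolding l by simp
  moreover have "5 * l * Av / (2 * s) \<le> \<epsilon> / 2"
    using h sp e by (simp add: field_simps)
  ultimately show ?thesis using e1 unfolding s_def by linarith
qed

lemma kernA:
  fixes v :: "real \<Rightarrow> real" and q :: "real \<Rightarrow> real \<Rightarrow> real"
  assumes t: "t \<ge> 1" and qm: "q t \<in> borel_measurable borel" and qb: "\<And>z. (q t z)\<^sup>2 \<le> 5 * g0 t z"
    and vm: "v \<in> borel_measurable lborel" and v2: "integrable lborel (\<lambda>y. (v y)\<^sup>2)" and l: "l > 0"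
  shows "integrable lborel (\<lambda>y. v y * q t (x - y + t))"
    "\<bar>\<integral>y. v y * q t (x - y + t) \<partial>lborel\<bar> \<le> (l * (\<integral>y. (v y)\<^sup>2 \<partial>lborel) + 5 * sqrt (4 * pi * t) / l) / 2"
proof -
  have pm: "(\<lambda>y. x - y + t) \<in> borel_measurable borel" by measurable
  have G: "has_bochner_integral lborel (\<lambda>y. g0 t (x - y + t)) (sqrt (4 * pi * t))"
    using gaussA[of t x t] t by simp
  show "integrable lborel (\<lambda>y. v y * q t (x - y + t))"
    using kern(1)[where q=q and p="\<lambda>y. x - y + t", OF t qm qb G pm vm v2 l] .
  show "\<bar>\<integral>y. v y * q t (x - y + t) \<partial>lborel\<bar> \<le> (l * (\<integral>y. (v y)\<^sup>2 \<partial>lborel) + 5 * sqrt (4 * pi * t) / l) / 2"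
    using kern(2)[where q=q and p="\<lambda>y. x - y + t", OF t qm qb G pm vm v2 l] .
qed

lemma kernB:
  fixes v :: "real \<Rightarrow> real" and q :: "real \<Rightarrow> real \<Rightarrow> real"
  assumes t: "t \<ge> 1" and qm: "q t \<in> borel_measurable borel" and qb: "\<And>z. (q t z)\<^sup>2 \<le> 5 * g0 t z"
    and vm: "v \<in> borel_measurable lborel" and v2: "integrable lborel (\<lambda>y. (v y)\<^sup>2)" and l: "l > 0"
  shows "integrable lborel (\<lambda>y. v y * q t (x + y - t))"
    "\<bar>\<integral>y. v y * q t (x + y - t) \<partial>lborel\<bar> \<le> (l * (\<integral>y. (v y)\<^sup>2 \<partial>lborel) + 5 * sqrt (4 * pi * t) / l) / 2"
proof -
  have pm: "(\<lambda>y. x + y - t) \<in> borel_measurable borel" by measurable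
  have G: "has_bochner_integral lborel (\<lambda>y. g0 t (x + y - t)) (sqrt (4 * pi * t))"
    using gaussB[of t x t] t by simp
  show "integrable lborel (\<lambda>y. v y * q t (x + y - t))"
    using kern(1)[where q=q and p="\<lambda>y. x + y - t", OF t qm qb G pm vm v2 l] .
  show "\<bar>\<integral>y. v y * q t (x + y - t) \<partial>lborel\<bar> \<le> (l * (\<integral>y. (v y)\<^sup>2 \<partial>lborel) + 5 * sqrt (4 * pi * t) / l) / 2"
    using kern(2)[where q=q and p="\<lambda>y. x + y - t", OF t qm qb G pm vm v2 l] .
qed

theorem lemma4p3:
  fixes u0 :: "real \<Rightarrow> real"
  assumes "H2_pos u0"
  shows "\<forall>\<epsilon>>0. \<forall>\<^sub>F t in at_top. \<forall>x>0.
           \<bar>sol u0 t x\<bar> \<le> \<epsilon> \<and>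
           \<bar>deriv (sol u0 t) x\<bar> \<le> \<epsilon> \<and>
           \<bar>deriv (deriv (sol u0 t)) x\<bar> \<le> \<epsilon>"
proof (intro allI impI)
  fix \<epsilon> :: real assume e: "\<epsilon> > 0"
  from assms have L2: "L2_pos u0" by (simp add: H2_pos_def)
  define v where "v y = indicator {0<..} y * u0 y" for y :: real
  have vm: "v \<in> borel_measurable lborel"
    using L2 unfolding L2_pos_def set_borel_measurable_def v_def by simp
  have veq: "(v y)\<^sup>2 = indicator {0<..} y *\<^sub>R (u0 y)\<^sup>2" for y
    by (cases "y > 0") (auto simp: v_def)
  have v2: "integrable lborel (\<lambda>y. (v y)\<^sup>2)"
    using L2 unfolding L2_pos_def set_integrable_def veq by simp
  define Av where "Av = (\<integral>y. (v y)\<^sup>2 \<partial>lborel)"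
  have Av: "Av \<ge> 0" unfolding Av_def by simp
  define l where "l = 25 / \<epsilon>"
  have lp: "l > 0" using e by (simp add: l_def)
  define T where "T = max 1 ((5 * l * Av / \<epsilon>)\<^sup>2)"
  show "\<forall>\<^sub>F t in at_top. \<forall>x>0. \<bar>sol u0 t x\<bar> \<le> \<epsilon> \<and> \<bar>deriv (sol u0 t) x\<bar> \<le> \<epsilon> \<and>
           \<bar>deriv (deriv (sol u0 t)) x\<bar> \<le> \<epsilon>"
  proof (rule eventually_at_top_linorderI[of T])
    fix t assume tT: "t \<ge> T"
    have t1: "t \<ge> 1" using tT by (simp add: T_def)
    have tp: "t > 0" "t \<noteq> 0" using t1 by auto
    define c where "c = 1 / sqrt (4 * pi * t)"
    have cp: "c > 0" using tp by (simp add: c_def)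
    define B where "B = (l * Av + 5 * sqrt (4 * pi * t) / l) / 2"
    have fin: "5 * (c * B) \<le> \<epsilon>"
      unfolding c_def B_def by (rule final_arith[OF e l_def Av]) (use tT T_def in simp)
    define F where "F q x = (\<integral>y. v y * q t (x - y + t) \<partial>lborel)" for q :: "real \<Rightarrow> real \<Rightarrow> real" and x
    define G where "G q x = (\<integral>y. v y * q t (x + y - t) \<partial>lborel)" for q :: "real \<Rightarrow> real \<Rightarrow> real" and x
    have bq: "(g0 t z)\<^sup>2 \<le> 5 * g0 t z" "(g1 t z)\<^sup>2 \<le> 5 * g0 t z" "(g2 t z)\<^sup>2 \<le> 5 * g0 t z" for z
      using b0[OF tp(1)] b1[OF t1] b2[OF t1] by auto
    have iA: "integrable lborel (\<lambda>y. v y * g0 t (x - y + t))"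
      "integrable lborel (\<lambda>y. v y * g1 t (x - y + t))"
      "integrable lborel (\<lambda>y. v y * g2 t (x - y + t))" for x
      using kernA(1)[where q=g0, OF t1 g_meas(1) bq(1) vm v2 lp]
        kernA(1)[where q=g1, OF t1 g_meas(2) bq(2) vm v2 lp]
        kernA(1)[where q=g2, OF t1 g_meas(3) bq(3) vm v2 lp] by auto
    have iB: "integrable lborel (\<lambda>y. v y * g0 t (x + y - t))"
      "integrable lborel (\<lambda>y. v y * g1 t (x + y - t))"
      "integrable lborel (\<lambda>y. v y * g2 t (x + y - t))" for x
      using kernB(1)[where q=g0, OF t1 g_meas(1) bq(1) vm v2 lp]
        kernB(1)[where q=g1, OF t1 g_meas(2) bq(2) vm v2 lp]
        kernB(1)[where q=g2, OF t1 g_meas(3) bq(3) vm v2 lp] by auto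
    have bF: "\<bar>F g0 x\<bar> \<le> B" "\<bar>F g1 x\<bar> \<le> B" "\<bar>F g2 x\<bar> \<le> B" for x
      unfolding F_def B_def Av_def
      using kernA(2)[where q=g0, OF t1 g_meas(1) bq(1) vm v2 lp]
        kernA(2)[where q=g1, OF t1 g_meas(2) bq(2) vm v2 lp]
        kernA(2)[where q=g2, OF t1 g_meas(3) bq(3) vm v2 lp] by auto
    have bG: "\<bar>G g0 x\<bar> \<le> B" "\<bar>G g1 x\<bar> \<le> B" "\<bar>G g2 x\<bar> \<le> B" for x
      unfolding G_def B_def Av_def
      using kernB(2)[where q=g0, OF t1 g_meas(1) bq(1) vm v2 lp]
        kernB(2)[where q=g1, OF t1 g_meas(2) bq(2) vm v2 lp]
        kernB(2)[where q=g2, OF t1 g_meas(3) bq(3) vm v2 lp] by auto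
    have dF0: "(F g0 has_real_derivative F g1 x) (at x)" for x
      unfolding F_def by (rule FderA[where q=g0 and q'=g1, OF t1 g0_der[OF tp(2)] g_meas(2) bq(2) iA(1) vm v2])
    have dF1: "(F g1 has_real_derivative F g2 x) (at x)" for x
      unfolding F_def by (rule FderA[where q=g1 and q'=g2, OF t1 g1_der[OF tp(2)] g_meas(3) bq(3) iA(2) vm v2])
    have dG0: "(G g0 has_real_derivative G g1 x) (at x)" for x
      unfolding G_def by (rule FderB[where q=g0 and q'=g1, OF t1 g0_der[OF tp(2)] g_meas(2) bq(2) iB(1) vm v2])
    have dG1: "(G g1 has_real_derivative G g2 x) (at x)" for x
      unfolding G_def by (rule FderB[where q=g1 and q'=g2, OF t1 g1_der[OF tp(2)] g_meas(3) bq(3) iB(2) vm v2])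
    have solE: "sol u0 t = (\<lambda>x. c * (F g0 x - exp (- x) * G g0 x))"
    proof
      fix x
      have ie: "indicator {0<..} y *\<^sub>R (u0 y * (exp (- ((x - y + t)\<^sup>2) / (4 * t))
                              - exp (- x) * exp (- ((x + y - t)\<^sup>2) / (4 * t))))
          = v y * g0 t (x - y + t) - exp (- x) * (v y * g0 t (x + y - t))" for y
        by (simp add: v_def g0_def algebra_simps)
      show "sol u0 t x = c * (F g0 x - exp (- x) * G g0 x)"
        unfolding sol_def set_lebesgue_integral_def ie c_def F_def G_def
        using iA(1) iB(1) by simp
    qed
    define S1 where "S1 x = c * (F g1 x - (exp (- x) * G g1 x - exp (- x) * G g0 x))" for x
    define S2 where "S2 x = c * (F g2 x - exp (- x) * (G g2 x - 2 * G g1 x + G g0 x))" for x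
    have d1: "(sol u0 t has_real_derivative S1 x) (at x)" for x
      unfolding solE S1_def
      by (auto intro!: derivative_eq_intros dF0 dG0 simp: algebra_simps)
    have D1: "deriv (sol u0 t) = S1"
      using d1 by (intro ext DERIV_imp_deriv)
    have d2: "(S1 has_real_derivative S2 x) (at x)" for x
      unfolding S1_def[abs_def] S2_def
      by (auto intro!: derivative_eq_intros dF1 dG0 dG1 simp: algebra_simps)
    have D2: "deriv (deriv (sol u0 t)) = S2"
      unfolding D1 using d2 by (intro ext DERIV_imp_deriv)
    show "\<forall>x>0. \<bar>sol u0 t x\<bar> \<le> \<epsilon> \<and> \<bar>deriv (sol u0 t) x\<bar> \<le> \<epsilon> \<and> \<bar>deriv (deriv (sol u0 t)) x\<bar> \<le> \<epsilon>"
    proof (intro allI impI conjI)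
      fix x :: real assume x: "x > 0"
      have ex: "exp (- x) \<le> 1" "exp (- x) > 0" using x by auto
      have Bp: "B \<ge> 0" using bF(1)[of x] by simp
      have me: "\<bar>exp (- x) * a\<bar> \<le> b" if "\<bar>a\<bar> \<le> b" for a b
      proof -
        have "\<bar>exp (- x) * a\<bar> = exp (- x) * \<bar>a\<bar>" using ex by (simp add: abs_mult)
        also have "\<dots> \<le> 1 * \<bar>a\<bar>" using ex by (intro mult_right_mono) auto
        finally show ?thesis using that by simp
      qed
      have "\<bar>F g0 x - exp (- x) * G g0 x\<bar> \<le> 2 * B"
        using bF(1)[of x] me[OF bG(1)[of x]] by linarith
      then have "\<bar>sol u0 t x\<bar> \<le> c * (2 * B)" unfolding solE using cp by (simp add: abs_mult)
      moreover have "0 \<le> c * B" using cp Bp by simp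
      ultimately show "\<bar>sol u0 t x\<bar> \<le> \<epsilon>" using fin by simp
      have "\<bar>F g1 x - (exp (- x) * G g1 x - exp (- x) * G g0 x)\<bar> \<le> 3 * B"
        using bF(2)[of x] me[OF bG(2)[of x]] me[OF bG(1)[of x]] by linarith
      then have "\<bar>S1 x\<bar> \<le> c * (3 * B)" unfolding S1_def using cp by (simp add: abs_mult)
      moreover have "0 \<le> c * B" using cp Bp by simp
      ultimately show "\<bar>deriv (sol u0 t) x\<bar> \<le> \<epsilon>" unfolding D1 using fin by simp
      have h4: "\<bar>G g2 x - 2 * G g1 x + G g0 x\<bar> \<le> 4 * B"
        using bG(1)[of x] bG(2)[of x] bG(3)[of x] by linarith
      have "\<bar>F g2 x - exp (- x) * (G g2 x - 2 * G g1 x + G g0 x)\<bar> \<le> 5 * B"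
        using bF(3)[of x] me[OF h4] by linarith
      then have "\<bar>S2 x\<bar> \<le> c * (5 * B)" unfolding S2_def using cp by (simp add: abs_mult)
      then show "\<bar>deriv (deriv (sol u0 t)) x\<bar> \<le> \<epsilon>" unfolding D2 using fin by simp
    qed
  qed
qed


end
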